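(* Let $n\ge5$, let $\Delta$ be a triangulation of the punctured $n$-gon $\mathcal{P}_n$ with quiver $Q_\Delta$, and let $\alpha\in\Delta$ be a diagonal which is not close to the border and which is not a diagonal between the puncture and the border. Then the quiver obtained from $Q_\Delta$ by factoring out the vertex $v_\alpha$ is disconnected.
   Context: $\mathcal{P}_n$ is a regular $n$-gon with one puncture in its center. For border vertices $a \neq b$, $\delta_{a,b}$ is the counterclockwise border path from $a$ to $b$ and $|\delta_{a,b}|$ the number of border vertices on it (including $a,b$); $\delta_{a,a}$ goes once around. A diagonal is an edge (homotopy class of non-self-crossing interior paths from $a$ to $b$ homotopic to $\delta_{a,b}$, with $|\delta_{a,b}|\ge3$) together with a tag $\epsilon\in\{\pm1\}$, with $\epsilon=1$ forced if $a\ne b$; edges with $a=b$ are drawn as arcs from the puncture to $a$ and called diagonals between the puncture and the border. Two puncture diagonals at $a,c$ with tags $\epsilon,\epsilon'$ cross iff $a\ne c$ and $\epsilon\ne\epsilon'$; otherwise crossing means intersecting in the interior for all representatives. A triangulation is a maximal set of pairwise non-crossing diagonals. A diagonal from $a$ to $b$, $a\ne b$, is close to the border if $|\delta_{a,b}|=3$. The quiver $Q_\Delta$ has a vertex $v_\beta$ for each $\beta\in\Delta$, an arrow between $v_\beta,v_\gamma$ when $\beta,\gamma$ bound a common triangle, oriented $v_\beta\to v_\gamma$ if $\gamma$ is obtained from $\beta$ by anticlockwise rotation about their common vertex (two diagonals from the puncture to the same vertex are treated as loops around the puncture, giving separate triangles), and with oriented $2$-cycles deleted. Factoring out a vertex means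 deleting it and all arrows incident to it. *)

theory Defs
  imports Main
begin

text \<open>Combinatorial model of the once-punctured regular n-gon P_n.
  Border vertices are 0, ..., n-1 in counterclockwise order; the border edge
  with index i joins vertex i to vertex (i+1) mod n.\<close>

text \<open>Ord a b (a \<noteq> b) is the edge from a to b homotopic to the
  counterclockwise border path delta_{a,b} (its tag is forced to be 1);
  Punc a e is the edge with a = b (drawn as an arc from the puncture to a)
  with tag e \<in> {1,-1}.\<close>
datatype diag = Ord nat nat | Punc nat int

definition ccw_dist :: "nat \<Rightarrow> nat \<Rightarrow> nat \<Rightarrow> nat" where
  "ccw_dist n a b = (b + n - a) mod n"

text \<open>|delta_{a,b}| for a \<noteq> b: number of border vertices on the path\<close>
definition path_card :: "nat \<Rightarrow> nat \<Rightarrow> nat \<Rightarrow> nat" where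
  "path_card n a b = ccw_dist n a b + 1"

text \<open>border edges (by index) traversed by delta_{a,b}\<close>
definition path_edges :: "nat \<Rightarrow> nat \<Rightarrow> nat \<Rightarrow> nat set" where
  "path_edges n a b = {(a + i) mod n | i. i < ccw_dist n a b}"

text \<open>border vertices strictly inside delta_{a,b}\<close>
definition path_inner :: "nat \<Rightarrow> nat \<Rightarrow> nat \<Rightarrow> nat set" where
  "path_inner n a b = {(a + i) mod n | i. 0 < i \<and> i < ccw_dist n a b}"

fun valid_diag :: "nat \<Rightarrow> diag \<Rightarrow> bool" where
  "valid_diag n (Ord a b) = (a < n \<and> b < n \<and> a \<noteq> b \<and> path_card n a b \<ge> 3)"
| "valid_diag n (Punc a e) = (a < n \<and> (e = 1 \<or> e = -1))"

text \<open>Two ordinary diagonals are non-crossing iff the border regions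
  they cut off (which do not contain the puncture) are nested or have disjoint
  border edges; a puncture diagonal at p crosses an ordinary diagonal (a,b) iff
  p lies strictly inside delta_{a,b}; two puncture diagonals cross iff their
  border vertices differ and their tags differ.\<close>
fun crosses :: "nat \<Rightarrow> diag \<Rightarrow> diag \<Rightarrow> bool" where
  "crosses n (Ord a b) (Ord c d) =
     (\<not> (path_edges n a b \<subseteq> path_edges n c d \<or> path_edges n c d \<subseteq> path_edges n a b
         \<or> path_edges n a b \<inter> path_edges n c d = {}))"
| "crosses n (Ord a b) (Punc p e) = (p \<in> path_inner n a b)"
| "crosses n (Punc p e) (Ord a b) = (p \<in> path_inner n a b)"
| "crosses n (Punc a e) (Punc c e') = (a \<noteq> c \<and> e \<noteq> e')"

definition triangulation :: "nat \<Rightarrow> diag set \<Rightarrow> bool" where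
  "triangulation n T \<longleftrightarrow>
     (\<forall>d\<in>T. valid_diag n d) \<and>
     (\<forall>d\<in>T. \<forall>d'\<in>T. \<not> crosses n d d') \<and>
     (\<forall>d. valid_diag n d \<and> d \<notin> T \<longrightarrow> (\<exists>d'\<in>T. crosses n d d'))"

fun close_to_border :: "nat \<Rightarrow> diag \<Rightarrow> bool" where
  "close_to_border n (Ord a b) = (path_card n a b = 3)"
| "close_to_border n (Punc a e) = False"

fun puncture_diag :: "diag \<Rightarrow> bool" where
  "puncture_diag (Ord a b) = False"
| "puncture_diag (Punc a e) = True"

text \<open>A side of a triangle from border vertex a to border vertex b (a \<noteq> b),
  lying along delta_{a,b}: either a diagonal of T or a border edge.\<close>
definition side_ok :: "nat \<Rightarrow> diag set \<Rightarrow> nat \<Rightarrow> nat \<Rightarrow> bool" where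
  "side_ok n T a b \<longleftrightarrow> Ord a b \<in> T \<or> (a < n \<and> b = (a + 1) mod n)"

text \<open>Triangles not having the puncture as a vertex: vertices x, y, z in
  counterclockwise order, sides (x,y), (y,z) and the outer side (x,z).  If x = z
  the outer side is a loop at x around the puncture: this happens exactly when
  both tagged puncture diagonals at x are in T, each of which is treated as such
  a loop (giving separate triangles).  Its anticlockwise-rotation arrows are
  (x,y) -> (x,z) -> (y,z) -> (x,y).\<close>
definition border_triangle :: "nat \<Rightarrow> diag set \<Rightarrow> diag \<Rightarrow> diag \<Rightarrow> diag \<Rightarrow> bool" where
  "border_triangle n T s1 s2 s3 \<longleftrightarrow>
     (\<exists>x y z. x < n \<and> y < n \<and> z < n \<and> x \<noteq> y \<and> y \<noteq> z \<and>
        s1 = Ord x y \<and> s2 = Ord y z \<and> side_ok n T x y \<and> side_ok n T y z \<and>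
        path_edges n x y \<inter> path_edges n y z = {} \<and>
        (if x \<noteq> z
         then s3 = Ord x z \<and> side_ok n T x z \<and>
              path_edges n x y \<union> path_edges n y z = path_edges n x z
         else (\<exists>e. s3 = Punc x e) \<and> s3 \<in> T \<and> Punc x 1 \<in> T \<and> Punc x (-1) \<in> T \<and>
              path_edges n x y \<union> path_edges n y z = {..<n}))"

text \<open>Triangles with the puncture as a vertex: puncture diagonals at p \<noteq> q with
  equal tag, and the side (p,q).  Arrows: P_p -> P_q -> (p,q) -> P_p.\<close>
definition puncture_triangle :: "nat \<Rightarrow> diag set \<Rightarrow> nat \<Rightarrow> nat \<Rightarrow> int \<Rightarrow> bool" where
  "puncture_triangle n T p q e \<longleftrightarrow>
     p \<noteq> q \<and> Punc p e \<in> T \<and> Punc q e \<in> T \<and> side_ok n T p q"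

text \<open>follows n T b c: b and c bound a common triangle and c is obtained from b
  by anticlockwise rotation about their common vertex.\<close>
definition follows :: "nat \<Rightarrow> diag set \<Rightarrow> diag \<Rightarrow> diag \<Rightarrow> bool" where
  "follows n T b c \<longleftrightarrow> b \<in> T \<and> c \<in> T \<and>
     ((\<exists>s1 s2 s3. border_triangle n T s1 s2 s3 \<and>
         ((b, c) = (s1, s3) \<or> (b, c) = (s3, s2) \<or> (b, c) = (s2, s1))) \<or>
      (\<exists>p q e. puncture_triangle n T p q e \<and>
         ((b, c) = (Punc p e, Punc q e) \<or> (b, c) = (Punc q e, Ord p q) \<or>
          (b, c) = (Ord p q, Punc p e))))"

text \<open>The quiver Q_T: vertices the diagonals of T, arrows from triangles, with
  oriented 2-cycles deleted.  (Arrows are recorded as a relation; multiplicities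
  play no role for connectedness.)\<close>
definition quiver :: "nat \<Rightarrow> diag set \<Rightarrow> diag set \<times> (diag \<times> diag) set" where
  "quiver n T = (T, {(b, c). follows n T b c \<and> \<not> follows n T c b})"

definition factor_out :: "'v set \<times> ('v \<times> 'v) set \<Rightarrow> 'v \<Rightarrow> 'v set \<times> ('v \<times> 'v) set" where
  "factor_out Q v = (fst Q - {v}, {(x, y) \<in> snd Q. x \<noteq> v \<and> y \<noteq> v})"

definition quiver_connected :: "'v set \<times> ('v \<times> 'v) set \<Rightarrow> bool" where
  "quiver_connected Q \<longleftrightarrow>
     (\<forall>x\<in>fst Q. \<forall>y\<in>fst Q. (x, y) \<in> ({(u, w) \<in> snd Q. u \<in> fst Q \<and> w \<in> fst Q}
                                      \<union> {(w, u) | u w. (u, w) \<in> snd Q \<and> u \<in> fst Q \<and> w \<in> fst Q})\<^sup>*)"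

definition quiver_disconnected :: "'v set \<times> ('v \<times> 'v) set \<Rightarrow> bool" where
  "quiver_disconnected Q \<longleftrightarrow> \<not> quiver_connected Q"

end

theory Submission
  imports Defs
begin


lemma mod_inj_le: "(i::nat) \<le> j \<Longrightarrow> j < n \<Longrightarrow> (c+i) mod n = (c+j) mod n \<Longrightarrow> i = j"
proof (rule ccontr)
  assume a: "i \<le> j" "j < n" "(c+i) mod n = (c+j) mod n" "i \<noteq> j"
  have "n dvd (c+j) - (c+i)" using mod_eq_dvd_iff_nat[of "c+i" "c+j" n] a by simp
  hence "n dvd j - i" by simp
  moreover have "0 < j - i" using a by simp
  ultimately have "n \<le> j - i" by (rule dvd_imp_le)
  thus False using a by simp
qed

lemma mod_inj: "(i::nat) < n \<Longrightarrow> j < n \<Longrightarrow> (c+i) mod n = (c+j) mod n \<Longrightarrow> i = j"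
  by (metis mod_inj_le nat_le_linear)

lemma ccw_props: assumes "c < n" "e < n" "c \<noteq> e"
  shows "0 < ccw_dist n c e \<and> ccw_dist n c e < n \<and> (c + ccw_dist n c e) mod n = e"
proof (cases "c \<le> e")
  case True
  have "e + n - c = (e - c) + n" using True by simp
  hence "ccw_dist n c e = (e - c + n) mod n" unfolding ccw_dist_def by simp
  also have "\<dots> = e - c" using assms by simp
  finally have d: "ccw_dist n c e = e - c" .
  have "c + (e - c) = e" using True by simp
  then show ?thesis using assms True d by simp
next
  case False
  hence d: "ccw_dist n c e = e + n - c" using assms unfolding ccw_dist_def by simp
  have "c + (e + n - c) = e + n" using False assms by simp
  then show ?thesis using assms False d by simp
qed

lemma P_card: assumes "d \<le> n" shows "card {(c+i) mod n | i. i < (d::nat)} = d"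
proof -
  have "{(c+i) mod n | i. i < d} = (\<lambda>i. (c+i) mod n) ` {..<d}" by auto
  moreover have "inj_on (\<lambda>i. (c+i) mod n) {..<d}"
  proof (rule inj_onI)
    fix x y assume "x \<in> {..<d}" "y \<in> {..<d}" "(c+x) mod n = (c+y) mod n"
    then show "x = y" using assms by (intro mod_inj[of x n y c]) auto
  qed
  ultimately show ?thesis by (simp add: card_image)
qed

lemma P_start: assumes "d < n" shows "(c+(n-1)) mod n \<notin> {(c+i) mod n | i. i < (d::nat)}"
proof
  assume "(c+(n-1)) mod n \<in> {(c+i) mod n | i. i < (d::nat)}"
  then obtain i where "i < d" "(c+i) mod n = (c+(n-1)) mod n" by auto
  hence "i = n - 1" using assms by (intro mod_inj[of i n "n-1" c]) auto
  thus False using \<open>i < d\<close> assms by linarith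
qed

lemma P_eq: assumes as: "c < n" "a < n" "0 < d" "d < n" "d' < n"
  and eq: "{(c+i) mod n | i. i < (d::nat)} = {(a+i) mod n | i. i < d'}"
  shows "c = a \<and> d = d'"
proof -
  have "card {(c+i) mod n | i. i < (d::nat)} = card {(a+i) mod n | i. i < d'}" using eq by simp
  hence dd: "d = d'" using P_card[of d n c] P_card[of d' n a] as by simp
  have c0: "(c+0) mod n = c" using as by simp
  have "c \<in> {(c+i) mod n | i. i < d}" unfolding mem_Collect_eq
    by (rule exI[of _ 0]) (use as c0 in auto)
  then obtain i where i: "i < d'" "c = (a+i) mod n" using eq by auto
  show ?thesis
  proof (cases i)
    case 0 then show ?thesis using i dd as by simp
  next
    case (Suc k)
    have "c + (n-1) = (a+i) mod n + (n - 1)" using i by simp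
    hence "(c+(n-1)) mod n = (a + i + (n-1)) mod n" by (simp add: mod_add_left_eq)
    also have "a + i + (n-1) = (a + k) + n" using Suc as by simp
    also have "(a + k + n) mod n = (a+k) mod n" by simp
    finally have "(c+(n-1)) mod n \<in> {(a+i) mod n | i. i < d'}" using i Suc by auto
    then show ?thesis using P_start[of d n c] eq as by simp
  qed
qed



definition ins :: "nat \<Rightarrow> nat set \<Rightarrow> diag \<Rightarrow> bool" where
  "ins n A d = (case d of Ord c e \<Rightarrow> path_edges n c e \<subseteq> A | Punc p t \<Rightarrow> False)"

definition sideE :: "nat \<Rightarrow> diag \<Rightarrow> nat set" where
  "sideE n d = (case d of Ord c e \<Rightarrow> path_edges n c e | Punc p t \<Rightarrow> {..<n})"

lemma tri_noncross: "triangulation n T \<Longrightarrow> d \<in> T \<Longrightarrow> d' \<in> T \<Longrightarrow> \<not> crosses n d d'"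
  unfolding triangulation_def by blast

lemma tri_valid: "triangulation n T \<Longrightarrow> d \<in> T \<Longrightarrow> valid_diag n d"
  unfolding triangulation_def by blast

lemma ord_props: "valid_diag n (Ord c e) \<Longrightarrow>
   c < n \<and> e < n \<and> c \<noteq> e \<and> 0 < ccw_dist n c e \<and> ccw_dist n c e < n \<and> (c + ccw_dist n c e) mod n = e"
  using ccw_props[of c n e] by simp

lemma ord_eq: assumes "valid_diag n (Ord c e)" "valid_diag n (Ord a b)"
  and eq: "path_edges n c e = path_edges n a b" shows "c = a \<and> e = b"
proof -
  note p1 = ord_props[OF assms(1)] and p2 = ord_props[OF assms(2)]
  have eq': "{(c+i) mod n | i. i < ccw_dist n c e} = {(a+i) mod n | i. i < ccw_dist n a b}"
    using eq unfolding path_edges_def .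
  have "c = a \<and> ccw_dist n c e = ccw_dist n a b"
    by (rule P_eq[OF _ _ _ _ _ eq']) (use p1 p2 in auto)
  thus ?thesis using p1 p2 by metis
qed

lemma cls: assumes "triangulation n T" "Ord a b \<in> T" "Ord c e \<in> T"
  shows "path_edges n c e \<subseteq> path_edges n a b \<or> path_edges n a b \<subseteq> path_edges n c e
         \<or> path_edges n c e \<inter> path_edges n a b = {}"
  using tri_noncross[OF assms(1,2,3)] by auto

lemma border_edge: assumes "x < n" "2 \<le> n" shows "path_edges n x ((x+1) mod n) = {x}"
proof -
  have yn: "(x+1) mod n < n" using assms by simp
  have x0: "(x+0) mod n = x" using assms by simp
  have ne: "x \<noteq> (x+1) mod n"
  proof
    assume "x = (x+1) mod n"
    hence "(x+0) mod n = (x+1) mod n" using x0 by simp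
    hence "(0::nat) = 1" using assms by (intro mod_inj[of 0 n 1 x]) auto
    thus False by simp
  qed
  note cp = ccw_props[OF assms(1) yn ne]
  have "ccw_dist n x ((x+1) mod n) = 1"
    using cp assms by (intro mod_inj[of _ n 1 x]) auto
  hence "path_edges n x ((x+1) mod n) = {(x+i) mod n | i. i < (1::nat)}"
    unfolding path_edges_def by simp
  also have "\<dots> = {x}" using x0 by auto
  finally show ?thesis .
qed

lemma side_cls: assumes "triangulation n T" "Ord a b \<in> T" "side_ok n T x y" "2 \<le> n"
  shows "path_edges n x y \<subseteq> path_edges n a b \<or> path_edges n a b \<subseteq> path_edges n x y
         \<or> path_edges n x y \<inter> path_edges n a b = {}"
proof (cases "Ord x y \<in> T")
  case True then show ?thesis using cls assms by blast
next
  case False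
  hence "x < n \<and> y = (x+1) mod n" using assms(3) unfolding side_ok_def by blast
  hence "path_edges n x y = {x}" using border_edge assms(4) by blast
  then show ?thesis by auto
qed

lemma set_tri:
  fixes A E1 E2 E3 :: "'a set"
  assumes "E1 \<inter> E2 = {}" "E1 \<noteq> {}" "E2 \<noteq> {}" "E3 = E1 \<union> E2"
    "E1 \<subseteq> A \<or> A \<subseteq> E1 \<or> E1 \<inter> A = {}"
    "E2 \<subseteq> A \<or> A \<subseteq> E2 \<or> E2 \<inter> A = {}"
    "E3 \<subseteq> A \<or> A \<subseteq> E3 \<or> E3 \<inter> A = {}"
    "X \<in> {E1, E2, E3}" "Y \<in> {E1, E2, E3}" "X \<subset> A"
  shows "Y \<subseteq> A"
  using assms by blast

lemma pe_mem: assumes "x < n" "y < n" "x \<noteq> y" shows "x \<in> path_edges n x y"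
proof -
  have "0 < ccw_dist n x y" using ccw_props[OF assms] by simp
  moreover have "(x+0) mod n = x" using assms by simp
  ultimately show ?thesis unfolding path_edges_def mem_Collect_eq by metis
qed

lemma pe_sub: "path_edges n x y \<subseteq> {..<n}" if "0 < n"
  using that unfolding path_edges_def by auto

lemma border_tri: assumes tri: "triangulation n T" and al: "Ord a b \<in> T" and n2: "2 \<le> n"
  and bt: "border_triangle n T s1 s2 s3"
  and u: "u \<in> {s1, s2, s3}" and v: "v \<in> {s1, s2, s3}"
  and sub: "sideE n u \<subset> path_edges n a b"
  shows "sideE n v \<subseteq> path_edges n a b"
proof -
  obtain x y z where xyz: "x < n" "y < n" "z < n" "x \<noteq> y" "y \<noteq> z"
    "s1 = Ord x y" "s2 = Ord y z" "side_ok n T x y" "side_ok n T y z"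
    "path_edges n x y \<inter> path_edges n y z = {}"
    and rest: "(if x \<noteq> z
         then s3 = Ord x z \<and> side_ok n T x z \<and>
              path_edges n x y \<union> path_edges n y z = path_edges n x z
         else (\<exists>e. s3 = Punc x e) \<and> s3 \<in> T \<and> Punc x 1 \<in> T \<and> Punc x (-1) \<in> T \<and>
              path_edges n x y \<union> path_edges n y z = {..<n})"
    using bt unfolding border_triangle_def by blast
  let ?A = "path_edges n a b"
  let ?E1 = "path_edges n x y" and ?E2 = "path_edges n y z"
  have e1: "sideE n s1 = ?E1" "sideE n s2 = ?E2" using xyz unfolding sideE_def by auto
  have ne: "?E1 \<noteq> {}" "?E2 \<noteq> {}" using pe_mem xyz by blast+
  have c1: "?E1 \<subseteq> ?A \<or> ?A \<subseteq> ?E1 \<or> ?E1 \<inter> ?A = {}" using side_cls tri al xyz n2 by blast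
  have c2: "?E2 \<subseteq> ?A \<or> ?A \<subseteq> ?E2 \<or> ?E2 \<inter> ?A = {}" using side_cls tri al xyz n2 by blast
  have e3: "sideE n s3 = ?E1 \<union> ?E2 \<and> (sideE n s3 \<subseteq> ?A \<or> ?A \<subseteq> sideE n s3 \<or> sideE n s3 \<inter> ?A = {})"
  proof (cases "x = z")
    case True
    then obtain e where "s3 = Punc x e" "?E1 \<union> ?E2 = {..<n}" using rest by auto
    moreover have "?A \<subseteq> {..<n}" using pe_sub n2 by simp
    ultimately show ?thesis unfolding sideE_def by auto
  next
    case False
    hence "s3 = Ord x z" "side_ok n T x z" "?E1 \<union> ?E2 = path_edges n x z" using rest by auto
    moreover have "path_edges n x z \<subseteq> ?A \<or> ?A \<subseteq> path_edges n x z \<or> path_edges n x z \<inter> ?A = {}"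
      using side_cls tri al n2 calculation(2) by blast
    ultimately show ?thesis unfolding sideE_def by auto
  qed
  have X: "sideE n u \<in> {?E1, ?E2, sideE n s3}" using u e1 by blast
  have Y: "sideE n v \<in> {?E1, ?E2, sideE n s3}" using v e1 by blast
  have e3a: "sideE n s3 = ?E1 \<union> ?E2" using e3 by (rule conjunct1)
  have e3b: "sideE n s3 \<subseteq> ?A \<or> ?A \<subseteq> sideE n s3 \<or> sideE n s3 \<inter> ?A = {}" using e3 by (rule conjunct2)
  show ?thesis by (rule set_tri[OF xyz(10) ne e3a c1 c2 e3b X Y sub])
qed

lemma good: assumes tri: "triangulation n T" and al: "Ord a b \<in> T" and s: "s \<in> T" "s \<noteq> Ord a b"
  shows "(ins n (path_edges n a b) s \<longleftrightarrow> sideE n s \<subseteq> path_edges n a b)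
       \<and> (sideE n s \<subseteq> path_edges n a b \<longrightarrow> sideE n s \<subset> path_edges n a b)"
proof (cases s)
  case (Ord c e)
  have "path_edges n c e \<noteq> path_edges n a b"
    using ord_eq tri_valid[OF tri] s al Ord by blast
  then show ?thesis using Ord unfolding ins_def sideE_def by auto
next
  case (Punc p t)
  note pa = ord_props[OF tri_valid[OF tri al]]
  have "(a + (n-1)) mod n \<notin> path_edges n a b"
    using P_start[of "ccw_dist n a b" n a] pa unfolding path_edges_def by blast
  moreover have "(a + (n-1)) mod n \<in> {..<n}" using pa by simp
  ultimately have "\<not> {..<n} \<subseteq> path_edges n a b" by blast
  then show ?thesis using Punc unfolding ins_def sideE_def by auto
qed

lemma punc_tri: assumes tri: "triangulation n T" and al: "Ord a b \<in> T"
  and pq: "Ord p q \<in> T" "Ord p q \<noteq> Ord a b" and pe: "Punc p e \<in> T" "Punc q e \<in> T"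
  and sub: "path_edges n p q \<subseteq> path_edges n a b"
  shows False
proof -
  note pa = ord_props[OF tri_valid[OF tri al]]
  note pp = ord_props[OF tri_valid[OF tri pq(1)]]
  let ?dA = "ccw_dist n a b" and ?d = "ccw_dist n p q"
  have "p \<in> path_edges n p q" using pe_mem pp by blast
  hence "p \<in> path_edges n a b" using sub by blast
  then obtain i where i: "i < ?dA" "p = (a+i) mod n" unfolding path_edges_def by blast
  have "p \<notin> path_inner n a b" using tri_noncross[OF tri al pe(1)] by simp
  have "i = 0"
  proof (rule ccontr)
    assume "i \<noteq> 0"
    hence "0 < i \<and> i < ?dA \<and> p = (a+i) mod n" using i by simp
    hence "p \<in> path_inner n a b" unfolding path_inner_def by blast
    thus False using \<open>p \<notin> path_inner n a b\<close> by blast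
  qed
  hence pa0: "p = a" using i pa by simp
  have "path_edges n p q \<noteq> path_edges n a b"
    using ord_eq tri_valid[OF tri] pq al by blast
  hence "path_edges n p q \<subset> path_edges n a b" using sub by blast
  moreover have "finite (path_edges n a b)" using pe_sub[of n a b] pa finite_subset by blast
  ultimately have "card (path_edges n p q) < card (path_edges n a b)" by (rule psubset_card_mono[rotated])
  hence "?d < ?dA" using P_card[of ?d n p] P_card[of ?dA n a] pa pp unfolding path_edges_def by simp
  hence "0 < ?d \<and> ?d < ?dA \<and> q = (a + ?d) mod n" using pp pa0 by simp
  hence "q \<in> path_inner n a b" unfolding path_inner_def by blast
  thus False using tri_noncross[OF tri al pe(2)] by simp
qed

lemma follows_pres: assumes tri: "triangulation n T" and al: "Ord a b \<in> T" and n2: "2 \<le> n"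
  and f: "follows n T u v" and uv: "u \<noteq> Ord a b" "v \<noteq> Ord a b"
  shows "ins n (path_edges n a b) u \<longleftrightarrow> ins n (path_edges n a b) v"
proof -
  let ?A = "path_edges n a b"
  have uT: "u \<in> T" and vT: "v \<in> T" using f unfolding follows_def by auto
  note gu = good[OF tri al uT uv(1)] and gv = good[OF tri al vT uv(2)]
  consider (b) s1 s2 s3 where "border_triangle n T s1 s2 s3" "u \<in> {s1,s2,s3}" "v \<in> {s1,s2,s3}"
    | (p) p q e where "puncture_triangle n T p q e"
         "(u, v) = (Punc p e, Punc q e) \<or> (u, v) = (Punc q e, Ord p q) \<or> (u, v) = (Ord p q, Punc p e)"
    using f unfolding follows_def by blast
  then show ?thesis
  proof cases
    case b
    show ?thesis
    proof
      assume "ins n ?A u"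
      hence "sideE n u \<subset> ?A" using gu by blast
      hence "sideE n v \<subseteq> ?A" using border_tri[OF tri al n2 b(1) b(2) b(3)] by blast
      thus "ins n ?A v" using gv by blast
    next
      assume "ins n ?A v"
      hence "sideE n v \<subset> ?A" using gv by blast
      hence "sideE n u \<subseteq> ?A" using border_tri[OF tri al n2 b(1) b(3) b(2)] by blast
      thus "ins n ?A u" using gu by blast
    qed
  next
    case p
    have pt: "Punc p e \<in> T" "Punc q e \<in> T" using p(1) unfolding puncture_triangle_def by auto
    have "\<not> ins n ?A (Ord p q)" if "Ord p q \<in> T" "Ord p q \<noteq> Ord a b"
      using punc_tri[OF tri al that pt] unfolding ins_def by auto
    hence npq: "\<not> ins n ?A (Ord p q)" if "Ord p q \<in> {u, v}" using that uT vT uv by blast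
    have np: "\<And>r t. \<not> ins n ?A (Punc r t)" unfolding ins_def by simp
    from p(2) show ?thesis
    proof (elim disjE)
      assume "(u, v) = (Punc p e, Punc q e)" thus ?thesis using np by simp
    next
      assume h: "(u, v) = (Punc q e, Ord p q)"
      hence "u = Punc q e" "v = Ord p q" by simp_all
      thus ?thesis using np npq by simp
    next
      assume h: "(u, v) = (Ord p q, Punc p e)"
      hence "v = Punc p e" "u = Ord p q" by simp_all
      thus ?thesis using np npq by simp
    qed
  qed
qed



lemma outside_ex: assumes tri: "triangulation n T" and al: "Ord a b \<in> T"
  shows "\<exists>y\<in>T. y \<noteq> Ord a b \<and> \<not> ins n (path_edges n a b) y"
proof -
  note pa = ord_props[OF tri_valid[OF tri al]]
  let ?A = "path_edges n a b"
  have np: "\<And>r t. \<not> ins n ?A (Punc r t)" unfolding ins_def by simp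
  show ?thesis
  proof (cases "Punc a 1 \<in> T")
    case True then show ?thesis using np by blast
  next
    case False
    have "valid_diag n (Punc a 1)" using pa by simp
    then obtain d' where d': "d' \<in> T" "crosses n (Punc a 1) d'"
      using tri False unfolding triangulation_def by blast
    show ?thesis
    proof (cases d')
      case (Punc r t) then show ?thesis using d' np by blast
    next
      case (Ord c e)
      note pc = ord_props[OF tri_valid[OF tri d'(1)[unfolded Ord]]]
      have "a \<in> path_inner n c e" using d' Ord by simp
      then obtain i where i: "0 < i" "i < ccw_dist n c e" "a = (c+i) mod n"
        unfolding path_inner_def by blast
      have "(a + (n-1)) mod n = (c + i + (n-1)) mod n" using i(3) by (simp add: mod_add_left_eq)
      also have "c + i + (n-1) = c + (i-1) + n" using i pc by simp
      also have "(c + (i-1) + n) mod n = (c + (i-1)) mod n" by simp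
      finally have eqm: "(a + (n-1)) mod n = (c + (i-1)) mod n" .
      have "i - 1 < ccw_dist n c e" using i by simp
      hence "(a + (n-1)) mod n \<in> path_edges n c e" unfolding path_edges_def eqm by blast
      moreover have "(a + (n-1)) mod n \<notin> ?A"
        using P_start[of "ccw_dist n a b" n a] pa unfolding path_edges_def by blast
      ultimately have ni: "\<not> ins n ?A d'" using Ord unfolding ins_def by auto
      moreover have "ins n ?A (Ord a b)" unfolding ins_def by simp
      ultimately show ?thesis using d' by metis
    qed
  qed
qed

lemma inside_ex: assumes tri: "triangulation n T" and al: "Ord a b \<in> T" and n5: "5 \<le> n"
  and nc: "path_card n a b \<noteq> 3"
  shows "\<exists>x\<in>T. x \<noteq> Ord a b \<and> ins n (path_edges n a b) x"
proof -
  have va: "valid_diag n (Ord a b)" using tri_valid[OF tri al] .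
  note pa = ord_props[OF va]
  let ?A = "path_edges n a b" and ?dA = "ccw_dist n a b"
  have "3 \<le> path_card n a b" using va by simp
  hence dA3: "3 \<le> ?dA" using nc unfolding path_card_def by simp
  define a2 where "a2 = (a+2) mod n"
  have a2n: "a2 < n" unfolding a2_def using n5 by simp
  have a0: "(a+0) mod n = a" using pa by simp
  have ne: "a \<noteq> a2"
  proof
    assume "a = a2"
    hence "(a+0) mod n = (a+2) mod n" using a0 unfolding a2_def by simp
    hence "(0::nat) = 2" using n5 by (intro mod_inj[of 0 n 2 a]) auto
    thus False by simp
  qed
  have d2: "ccw_dist n a a2 = 2"
    using ccw_props[of a n a2] pa a2n ne n5 unfolding a2_def by (intro mod_inj[of _ n 2 a]) auto
  have v0: "valid_diag n (Ord a a2)" using pa a2n ne d2 by (simp add: path_card_def)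
  have E0: "path_edges n a a2 = {(a+i) mod n | i. i < (2::nat)}" unfolding path_edges_def d2 ..
  have E0A: "path_edges n a a2 \<subseteq> ?A" unfolding path_edges_def d2 using dA3 by force
  have I0: "path_inner n a a2 \<subseteq> path_inner n a b" unfolding path_inner_def d2 using dA3 by auto
  have nea: "Ord a a2 \<noteq> Ord a b" using nc d2 unfolding path_card_def by auto
  have E0ne: "a \<in> path_edges n a a2" using pe_mem pa a2n ne by blast
  show ?thesis
  proof (cases "Ord a a2 \<in> T")
    case True then show ?thesis using nea E0A unfolding ins_def by auto
  next
    case False
    then obtain d' where d': "d' \<in> T" "crosses n (Ord a a2) d'"
      using tri v0 unfolding triangulation_def by blast
    show ?thesis
    proof (cases d')
      case (Punc r t)
      hence "r \<in> path_inner n a b" using d' I0 by auto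
      hence "crosses n (Ord a b) d'" using Punc by simp
      thus ?thesis using tri_noncross[OF tri al d'(1)] by blast
    next
      case (Ord c e)
      have cr: "\<not> (path_edges n a a2 \<subseteq> path_edges n c e \<or> path_edges n c e \<subseteq> path_edges n a a2
         \<or> path_edges n a a2 \<inter> path_edges n c e = {})" using d' Ord by simp
      have cl: "path_edges n c e \<subseteq> ?A \<or> ?A \<subseteq> path_edges n c e \<or> path_edges n c e \<inter> ?A = {}"
        using cls[OF tri al] d' Ord by blast
      have sub: "path_edges n c e \<subseteq> ?A" using cr cl E0A by blast
      have "d' \<noteq> Ord a b" using cr E0A Ord by auto
      then show ?thesis using d' sub Ord unfolding ins_def by auto
    qed
  qed
qed

theorem lemma5p4:
  fixes n :: nat and T :: "diag set" and \<alpha> :: diag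
  assumes "n \<ge> 5"
    and "triangulation n T"
    and "\<alpha> \<in> T"
    and "\<not> close_to_border n \<alpha>"
    and "\<not> puncture_diag \<alpha>"
  shows "quiver_disconnected (factor_out (quiver n T) \<alpha>)"
proof -
  obtain a b where ab: "\<alpha> = Ord a b" using assms(5) by (cases \<alpha>) auto
  have tri: "triangulation n T" and al: "Ord a b \<in> T" using assms ab by auto
  have nc: "path_card n a b \<noteq> 3" using assms(4) ab by simp
  let ?A = "path_edges n a b"
  obtain x where x: "x \<in> T" "x \<noteq> Ord a b" "ins n ?A x" using inside_ex[OF tri al assms(1) nc] by blast
  obtain y where y: "y \<in> T" "y \<noteq> Ord a b" "\<not> ins n ?A y" using outside_ex[OF tri al] by blast
  let ?Q = "factor_out (quiver n T) \<alpha>"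
  let ?R = "{(u, w) \<in> snd ?Q. u \<in> fst ?Q \<and> w \<in> fst ?Q}
            \<union> {(w, u) | u w. (u, w) \<in> snd ?Q \<and> u \<in> fst ?Q \<and> w \<in> fst ?Q}"
  have fQ: "fst ?Q = T - {\<alpha>}" unfolding factor_out_def quiver_def by simp
  have sQ: "\<And>u w. (u, w) \<in> snd ?Q \<Longrightarrow> follows n T u w \<and> u \<noteq> \<alpha> \<and> w \<noteq> \<alpha>"
    unfolding factor_out_def quiver_def by auto
  have stepR: "ins n ?A u \<longleftrightarrow> ins n ?A w" if "(u, w) \<in> ?R" for u w
  proof -
    from that have "(u, w) \<in> snd ?Q \<or> (w, u) \<in> snd ?Q" by blast
    thus ?thesis
    proof
      assume "(u, w) \<in> snd ?Q"
      thus ?thesis using sQ follows_pres[OF tri al] assms(1) ab by auto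
    next
      assume "(w, u) \<in> snd ?Q"
      thus ?thesis using sQ follows_pres[OF tri al] assms(1) ab by auto
    qed
  qed
  have "(x, y) \<notin> ?R\<^sup>*"
  proof
    assume "(x, y) \<in> ?R\<^sup>*"
    hence "ins n ?A y"
    proof (induction rule: rtrancl_induct)
      case base then show ?case using x by simp
    next
      case (step u w) then show ?case using stepR by blast
    qed
    thus False using y by simp
  qed
  moreover have "x \<in> fst ?Q" "y \<in> fst ?Q" using fQ x y ab by auto
  ultimately show ?thesis unfolding quiver_disconnected_def quiver_connected_def by blast
qed

end
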